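(* Let $p\ge1$, $0<\mu<\ell$, and real numbers $q_0,\dots,q_{p-1},r_0,\dots,r_{p-1}$. For $\nu\in[\mu,\ell]$ let $C_j(\nu):=q_j+r_j\nu$ and let $\mathbf C(\nu)\in\mathbb R^{p\times p}$ be the companion matrix with ones on the superdiagonal, last row $(C_0(\nu),C_1(\nu),\dots,C_{p-1}(\nu))$, and zeros elsewhere. Suppose there is no $\nu\in[\mu,\ell]$ with $C_0(\nu)=\dots=C_{p-1}(\nu)=0$. Then $$\sup_{\nu\in[\mu,\ell]}\rho(\mathbf C(\nu))=\sup_{\nu\in[\mu,\ell]}\liminf_{t\to\infty}\|\mathbf C(\nu)^t\|_\sigma^{1/t}\ge\liminf_{t\to\infty}\sup_{\nu\in[\mu,\ell]}\|\mathbf C(\nu)^t\|_\sigma^{1/t}.$$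
   Context: $\rho(\mathbf C)$ denotes the spectral radius (maximum modulus of an eigenvalue) and $\|\cdot\|_\sigma$ the spectral norm. *)

theory Defs
  imports "HOL-Analysis.Analysis" "Jordan_Normal_Form.Spectral_Radius"
begin

definition vec_l2 :: "real vec \<Rightarrow> real" where
  "vec_l2 x = sqrt (\<Sum>i<dim_vec x. (x $ i)\<^sup>2)"

definition spectral_norm :: "real mat \<Rightarrow> real" where
  "spectral_norm A = (SUP x \<in> {x. x \<in> carrier_vec (dim_col A) \<and> vec_l2 x = 1}. vec_l2 (A *\<^sub>v x))"

definition companion :: "nat \<Rightarrow> (nat \<Rightarrow> real) \<Rightarrow> real mat" where
  "companion p c = mat p p (\<lambda>(i,j). if i = p - 1 then c j else if j = i + 1 then 1 else 0)"

definition real_spectral_radius :: "real mat \<Rightarrow> real" where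
  "real_spectral_radius A = spectral_radius (map_mat complex_of_real A)"

end

theory Submission
  imports Defs
begin


definition mnorm :: "real mat \<Rightarrow> real" where
  "mnorm A = (\<Sum>i<dim_row A. \<Sum>j<dim_col A. \<bar>A $$ (i,j)\<bar>)"

lemma mnorm_nonneg: "0 \<le> mnorm A"
  unfolding mnorm_def by (intro sum_nonneg) auto

lemma mult_mat_entry:
  assumes "A \<in> carrier_mat n m" "B \<in> carrier_mat m k" "i < n" "j < k"
  shows "(A * B) $$ (i,j) = (\<Sum>l<m. A $$ (i,l) * B $$ (l,j))"
  using assms by (auto simp: scalar_prod_def atLeast0LessThan intro!: sum.cong)

lemma mult_mat_vec_entry:
  assumes "A \<in> carrier_mat n m" "x \<in> carrier_vec m" "i < n"
  shows "(A *\<^sub>v x) $ i = (\<Sum>l<m. A $$ (i,l) * x $ l)"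
  using assms by (auto simp: scalar_prod_def atLeast0LessThan intro!: sum.cong)

lemma mnorm_mult:
  assumes A: "A \<in> carrier_mat n m" and B: "B \<in> carrier_mat m k"
  shows "mnorm (A * B) \<le> mnorm A * mnorm B"
proof -
  have "mnorm (A * B) = (\<Sum>i<n. \<Sum>j<k. \<bar>\<Sum>l<m. A $$ (i,l) * B $$ (l,j)\<bar>)"
    unfolding mnorm_def using A B
    by (auto simp del: index_mult_mat simp add: mult_mat_entry[OF A B] intro!: sum.cong, auto)
  also have "\<dots> \<le> (\<Sum>i<n. \<Sum>j<k. \<Sum>l<m. \<bar>A $$ (i,l)\<bar> * \<bar>B $$ (l,j)\<bar>)"
    by (intro sum_mono) (metis (no_types, lifting) abs_mult sum.cong sum_abs)
  also have "\<dots> = (\<Sum>i<n. \<Sum>l<m. \<bar>A $$ (i,l)\<bar> * (\<Sum>j<k. \<bar>B $$ (l,j)\<bar>))"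
    by (simp add: sum.swap[of _ "{..<k}"] sum_distrib_left)
  also have "\<dots> \<le> (\<Sum>i<n. \<Sum>l<m. \<bar>A $$ (i,l)\<bar> * mnorm B)"
  proof (intro sum_mono mult_left_mono)
    fix l assume "l \<in> {..<m}"
    then show "(\<Sum>j<k. \<bar>B $$ (l,j)\<bar>) \<le> mnorm B"
    proof -
      have "(\<Sum>j<k. \<bar>B $$ (l,j)\<bar>) \<le> (\<Sum>i<m. \<Sum>j<k. \<bar>B $$ (i,j)\<bar>)"
        using \<open>l \<in> {..<m}\<close> by (intro member_le_sum[where f = "\<lambda>l. \<Sum>j<k. \<bar>B $$ (l,j)\<bar>"]) (auto intro: sum_nonneg)
      then show ?thesis unfolding mnorm_def using B by simp
    qed
  qed auto
  also have "\<dots> = mnorm A * mnorm B"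
    unfolding mnorm_def using A by (simp add: sum_distrib_right)
  finally show ?thesis .
qed

lemma vec_l2_L2: "vec_l2 x = L2_set (\<lambda>i. x $ i) {..<dim_vec x}"
  unfolding vec_l2_def L2_set_def by simp

lemma vec_l2_L2abs: "vec_l2 x = L2_set (\<lambda>i. \<bar>x $ i\<bar>) {..<dim_vec x}"
  unfolding vec_l2_def L2_set_def by simp

lemma vec_l2_nonneg: "0 \<le> vec_l2 x"
  unfolding vec_l2_L2 by simp

lemma abs_le_vec_l2: "i < dim_vec x \<Longrightarrow> \<bar>x $ i\<bar> \<le> vec_l2 x"
  unfolding vec_l2_L2
  using member_le_L2_set[of "{..<dim_vec x}" i "\<lambda>i. \<bar>x $ i\<bar>"] by (simp add: L2_set_def)

lemma vec_l2_smult: "vec_l2 (c \<cdot>\<^sub>v x) = \<bar>c\<bar> * vec_l2 x"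
proof -
  have "vec_l2 (c \<cdot>\<^sub>v x) = sqrt (c^2 * (\<Sum>i<dim_vec x. (x $ i)^2))"
    unfolding vec_l2_def by (simp add: power_mult_distrib sum_distrib_left)
  also have "\<dots> = \<bar>c\<bar> * vec_l2 x" unfolding vec_l2_def by (simp add: real_sqrt_mult)
  finally show ?thesis .
qed

lemma vec_l2_mult_le:
  assumes A: "A \<in> carrier_mat n m" and x: "x \<in> carrier_vec m"
  shows "vec_l2 (A *\<^sub>v x) \<le> mnorm A * vec_l2 x"
proof -
  let ?a = "\<lambda>i. \<Sum>j<m. \<bar>A $$ (i,j)\<bar>"
  have "vec_l2 (A *\<^sub>v x) = L2_set (\<lambda>i. \<bar>(A *\<^sub>v x) $ i\<bar>) {..<n}"
    unfolding vec_l2_L2abs using A by simp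
  also have "\<dots> \<le> L2_set (\<lambda>i. ?a i * vec_l2 x) {..<n}"
  proof (rule L2_set_mono)
    fix i assume i: "i \<in> {..<n}"
    have "\<bar>(A *\<^sub>v x) $ i\<bar> = \<bar>\<Sum>l<m. A $$ (i,l) * x $ l\<bar>"
      using mult_mat_vec_entry[OF A x] i by simp
    also have "\<dots> \<le> (\<Sum>l<m. \<bar>A $$ (i,l)\<bar> * \<bar>x $ l\<bar>)"
      by (metis (no_types, lifting) abs_mult sum.cong sum_abs)
    also have "\<dots> \<le> (\<Sum>l<m. \<bar>A $$ (i,l)\<bar> * vec_l2 x)"
      using x by (intro sum_mono mult_left_mono abs_le_vec_l2) auto
    finally show "\<bar>(A *\<^sub>v x) $ i\<bar> \<le> ?a i * vec_l2 x"
      by (simp add: sum_distrib_right)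
  qed (auto intro: sum_nonneg vec_l2_nonneg)
  also have "\<dots> = vec_l2 x * L2_set ?a {..<n}"
    using L2_set_left_distrib[OF vec_l2_nonneg, of "?a" "{..<n}" x] by (simp add: mult.commute)
  also have "\<dots> \<le> vec_l2 x * (\<Sum>i<n. ?a i)"
    by (intro mult_left_mono L2_set_le_sum vec_l2_nonneg) (auto intro: sum_nonneg)
  also have "(\<Sum>i<n. ?a i) = mnorm A" unfolding mnorm_def using A by simp
  finally show ?thesis by (simp add: mult.commute)
qed



lemma unit_vec_l2: "j < m \<Longrightarrow> vec_l2 (unit_vec m j) = 1"
proof -
  assume j: "j < m"
  have "(\<Sum>i<m. (unit_vec m j $ i)\<^sup>2) = (\<Sum>i<m. if i = j then 1 else (0::real))"
    by (intro sum.cong) (auto simp: unit_vec_def)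
  also have "\<dots> = 1" using j by simp
  finally show ?thesis unfolding vec_l2_def by simp
qed

lemma spec_set_ne:
  assumes "0 < m"
  shows "{x. x \<in> carrier_vec m \<and> vec_l2 x = 1} \<noteq> {}"
  using unit_vec_l2[OF assms] assms by (auto intro!: exI[of _ "unit_vec m 0"])

lemma spec_bdd:
  assumes A: "A \<in> carrier_mat n m"
  shows "bdd_above ((\<lambda>x. vec_l2 (A *\<^sub>v x)) ` {x. x \<in> carrier_vec m \<and> vec_l2 x = 1})"
  using vec_l2_mult_le[OF A] by (intro bdd_aboveI[of _ "mnorm A"]) fastforce

lemma spectral_norm_le_mnorm:
  assumes A: "A \<in> carrier_mat n m" and m: "0 < m"
  shows "spectral_norm A \<le> mnorm A"
  unfolding spectral_norm_def using A
  by (auto intro!: cSUP_least spec_set_ne[OF m] dest: vec_l2_mult_le[OF A])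

lemma spectral_norm_ge:
  assumes A: "A \<in> carrier_mat n m" and x: "x \<in> carrier_vec m" "vec_l2 x = 1"
  shows "vec_l2 (A *\<^sub>v x) \<le> spectral_norm A"
  unfolding spectral_norm_def using spec_bdd[OF A] A x
  by (intro cSUP_upper) auto

lemma spectral_norm_nonneg:
  assumes A: "A \<in> carrier_mat n m" and m: "0 < m"
  shows "0 \<le> spectral_norm A"
  using spectral_norm_ge[OF A unit_vec_carrier unit_vec_l2[OF m]] vec_l2_nonneg order_trans by blast

lemma spectral_norm_bound:
  assumes A: "A \<in> carrier_mat n m" and x: "x \<in> carrier_vec m"
  shows "vec_l2 (A *\<^sub>v x) \<le> spectral_norm A * vec_l2 x"
proof (cases "vec_l2 x = 0")
  case True
  then show ?thesis using vec_l2_mult_le[OF A x] vec_l2_nonneg[of "A *\<^sub>v x"] by simp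
next
  case False
  let ?L = "vec_l2 x"
  have L: "?L > 0" using False vec_l2_nonneg[of x] by simp
  let ?y = "(1 / ?L) \<cdot>\<^sub>v x"
  have "vec_l2 ?y = 1" using L by (simp add: vec_l2_smult)
  from spectral_norm_ge[OF A _ this] x
  have "vec_l2 (A *\<^sub>v ?y) \<le> spectral_norm A" by simp
  moreover have "A *\<^sub>v ?y = (1 / ?L) \<cdot>\<^sub>v (A *\<^sub>v x)" using mult_mat_vec[OF A x] .
  ultimately have "vec_l2 (A *\<^sub>v x) / ?L \<le> spectral_norm A" using L by (simp add: vec_l2_smult)
  then show ?thesis using L by (simp add: divide_le_eq)
qed



lemma vec_l2_sq: "(vec_l2 x)\<^sup>2 = (\<Sum>i<dim_vec x. (x $ i)\<^sup>2)"
  unfolding vec_l2_def by (simp add: sum_nonneg)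

lemma rsr_mem:
  assumes A: "A \<in> carrier_mat n n" and n: "0 < n"
  shows "real_spectral_radius A \<in> norm ` spectrum (map_mat complex_of_real A)"
  unfolding real_spectral_radius_def
  by (rule spectral_radius_mem_max(1)[OF _ n]) (use A in auto)

lemma rsr_nonneg:
  assumes A: "A \<in> carrier_mat n n" and n: "0 < n"
  shows "0 \<le> real_spectral_radius A"
  using rsr_mem[OF A n] by auto

lemma rsr_pow_le:
  assumes A: "A \<in> carrier_mat n n" and n: "0 < n"
  shows "real_spectral_radius A ^ t \<le> spectral_norm (A ^\<^sub>m t)"
proof -
  let ?Ac = "map_mat complex_of_real A"
  have Ac: "?Ac \<in> carrier_mat n n" using A by simp
  obtain la where la: "la \<in> spectrum ?Ac" and nla: "norm la = real_spectral_radius A"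
    using rsr_mem[OF A n] by auto
  from la obtain v where ev: "eigenvector ?Ac v la"
    unfolding spectrum_def eigenvalue_def by auto
  have v: "v \<in> carrier_vec n" and v0: "v \<noteq> 0\<^sub>v n"
    using ev A unfolding eigenvector_def by auto
  define B where "B = A ^\<^sub>m t"
  have B: "B \<in> carrier_mat n n" unfolding B_def using A by simp
  have "?Ac ^\<^sub>m t = map_mat complex_of_real B"
    unfolding B_def by (rule of_real_hom.mat_hom_pow[OF A, symmetric])
  with eigenvector_pow[OF Ac ev, of t]
  have Bv: "map_mat complex_of_real B *\<^sub>v v = la ^ t \<cdot>\<^sub>v v" by simp
  define w where "w i = la ^ t * v $ i" for i
  have Bvi: "(\<Sum>l<n. complex_of_real (B $$ (i,l)) * v $ l) = w i" if i: "i < n" for i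
  proof -
    have "(map_mat complex_of_real B *\<^sub>v v) $ i = (\<Sum>l<n. complex_of_real (B $$ (i,l)) * v $ l)"
      using mult_mat_vec_entry[of "map_mat complex_of_real B" n n v i] B v i by simp
    then show ?thesis using Bv i v unfolding w_def by simp
  qed
  define x where "x = vec n (\<lambda>j. Re (v $ j))"
  define y where "y = vec n (\<lambda>j. Im (v $ j))"
  have x: "x \<in> carrier_vec n" and y: "y \<in> carrier_vec n" unfolding x_def y_def by auto
  have Bx: "(B *\<^sub>v x) $ i = Re (w i)" and By: "(B *\<^sub>v y) $ i = Im (w i)" if i: "i < n" for i
  proof -
    have "(B *\<^sub>v x) $ i = (\<Sum>l<n. B $$ (i,l) * Re (v $ l))"
      using mult_mat_vec_entry[OF B x i] unfolding x_def by simp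
    also have "\<dots> = Re (\<Sum>l<n. complex_of_real (B $$ (i,l)) * v $ l)"
      by (simp add: Re_sum)
    finally show "(B *\<^sub>v x) $ i = Re (w i)" using Bvi[OF i] by simp
    have "(B *\<^sub>v y) $ i = (\<Sum>l<n. B $$ (i,l) * Im (v $ l))"
      using mult_mat_vec_entry[OF B y i] unfolding y_def by simp
    also have "\<dots> = Im (\<Sum>l<n. complex_of_real (B $$ (i,l)) * v $ l)"
      by (simp add: Im_sum)
    finally show "(B *\<^sub>v y) $ i = Im (w i)" using Bvi[OF i] by simp
  qed
  define Q where "Q = (\<Sum>i<n. (cmod (v $ i))\<^sup>2)"
  have Qxy: "Q = (vec_l2 x)\<^sup>2 + (vec_l2 y)\<^sup>2"
    unfolding Q_def vec_l2_sq x_def y_def by (simp add: cmod_power2 sum.distrib)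
  have "(vec_l2 (B *\<^sub>v x))\<^sup>2 + (vec_l2 (B *\<^sub>v y))\<^sup>2 = (\<Sum>i<n. (cmod (w i))\<^sup>2)"
    unfolding vec_l2_sq using B by (simp add: Bx By cmod_power2 sum.distrib del: index_mult_mat_vec)
  also have "\<dots> = (real_spectral_radius A ^ t)\<^sup>2 * Q"
    unfolding w_def Q_def by (simp add: norm_mult norm_power nla power_mult_distrib sum_distrib_left)
  finally have eq: "(vec_l2 (B *\<^sub>v x))\<^sup>2 + (vec_l2 (B *\<^sub>v y))\<^sup>2 = (real_spectral_radius A ^ t)\<^sup>2 * Q" .
  let ?S = "spectral_norm B"
  have "(vec_l2 (B *\<^sub>v x))\<^sup>2 \<le> (?S * vec_l2 x)\<^sup>2"
    by (intro power_mono spectral_norm_bound[OF B x] vec_l2_nonneg)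
  moreover have "(vec_l2 (B *\<^sub>v y))\<^sup>2 \<le> (?S * vec_l2 y)\<^sup>2"
    by (intro power_mono spectral_norm_bound[OF B y] vec_l2_nonneg)
  ultimately have "(real_spectral_radius A ^ t)\<^sup>2 * Q \<le> (?S * vec_l2 x)\<^sup>2 + (?S * vec_l2 y)\<^sup>2"
    using eq by linarith
  also have "\<dots> = ?S\<^sup>2 * Q" unfolding Qxy by (simp add: power_mult_distrib distrib_left)
  finally have le: "(real_spectral_radius A ^ t)\<^sup>2 * Q \<le> ?S\<^sup>2 * Q" .
  have "\<exists>i<n. v $ i \<noteq> 0"
  proof (rule ccontr)
    assume "\<not> (\<exists>i<n. v $ i \<noteq> 0)"
    then have "v = 0\<^sub>v n" using v by (intro eq_vecI) auto
    with v0 show False by simp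
  qed
  then obtain i where i: "i < n" and vi: "v $ i \<noteq> 0" by blast
  have Qpos: "Q > 0"
  proof -
    have "(cmod (v $ i))\<^sup>2 \<le> Q" unfolding Q_def by (rule member_le_sum) (use i in auto)
    moreover have "cmod (v $ i) > 0" using vi by simp
    then have "(cmod (v $ i))\<^sup>2 > 0" by (rule zero_less_power)
    ultimately show ?thesis by linarith
  qed
  have sq: "(real_spectral_radius A ^ t)\<^sup>2 \<le> ?S\<^sup>2" by (rule mult_right_le_imp_le[OF le Qpos])
  have S0: "0 \<le> ?S" by (rule spectral_norm_nonneg[OF B n])
  have "real_spectral_radius A ^ t \<le> ?S" by (rule power2_le_imp_le[OF sq S0])
  then show ?thesis unfolding B_def .
qed



lemma smult_pow_mat:
  assumes A: "(A :: 'a :: comm_ring_1 mat) \<in> carrier_mat n n"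
  shows "(c \<cdot>\<^sub>m A) ^\<^sub>m k = c ^ k \<cdot>\<^sub>m (A ^\<^sub>m k)"
proof (induction k)
  case 0
  then show ?case by (intro eq_matI) auto
next
  case (Suc k)
  have Ak: "A ^\<^sub>m k \<in> carrier_mat n n" using A by simp
  have "(c \<cdot>\<^sub>m A) ^\<^sub>m Suc k = (c ^ k \<cdot>\<^sub>m (A ^\<^sub>m k)) * (c \<cdot>\<^sub>m A)" using Suc by simp
  also have "\<dots> = c ^ k \<cdot>\<^sub>m ((A ^\<^sub>m k) * (c \<cdot>\<^sub>m A))"
    by (rule mult_smult_assoc_mat[OF Ak, of "c \<cdot>\<^sub>m A" n]) (use A in simp)
  also have "(A ^\<^sub>m k) * (c \<cdot>\<^sub>m A) = c \<cdot>\<^sub>m (A ^\<^sub>m k * A)"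
    using mult_smult_distrib[OF Ak A] .
  also have "c ^ k \<cdot>\<^sub>m (c \<cdot>\<^sub>m (A ^\<^sub>m k * A)) = c ^ Suc k \<cdot>\<^sub>m (A ^\<^sub>m Suc k)"
    by (intro eq_matI) (auto simp: mult.assoc mult.commute)
  finally show ?case .
qed

lemma smult_mat_mult_vec:
  assumes A: "(A :: 'a :: comm_ring_1 mat) \<in> carrier_mat n m" and w: "w \<in> carrier_vec m"
  shows "(c \<cdot>\<^sub>m A) *\<^sub>v w = c \<cdot>\<^sub>v (A *\<^sub>v w)"
proof (rule eq_vecI)
  fix i assume "i < dim_vec (c \<cdot>\<^sub>v (A *\<^sub>v w))"
  then have i: "i < n" using A by simp
  have "((c \<cdot>\<^sub>m A) *\<^sub>v w) $ i = (\<Sum>l<m. (c \<cdot>\<^sub>m A) $$ (i,l) * w $ l)"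
    using mult_mat_vec_entry[of "c \<cdot>\<^sub>m A" n m w i] A w i by simp
  also have "\<dots> = c * (\<Sum>l<m. A $$ (i,l) * w $ l)"
    using A i by (simp add: sum_distrib_left mult.assoc)
  also have "\<dots> = (c \<cdot>\<^sub>v (A *\<^sub>v w)) $ i"
    using mult_mat_vec_entry[OF A w i] A i by simp
  finally show "((c \<cdot>\<^sub>m A) *\<^sub>v w) $ i = (c \<cdot>\<^sub>v (A *\<^sub>v w)) $ i" .
qed (use A in simp)

lemma pointwise_exp_bound:
  assumes A: "A \<in> carrier_mat n n" and n: "0 < n" and rs: "real_spectral_radius A < s"
  shows "\<exists>c. \<forall>k. mnorm (A ^\<^sub>m k) \<le> c * s ^ k"
proof -
  have s: "0 < s" using rsr_nonneg[OF A n] rs by linarith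
  define Ac where "Ac = map_mat complex_of_real A"
  have Ac: "Ac \<in> carrier_mat n n" unfolding Ac_def using A by simp
  define B where "B = complex_of_real (1/s) \<cdot>\<^sub>m Ac"
  have B: "B \<in> carrier_mat n n" unfolding B_def using Ac by simp
  have "spectral_radius B < 1"
  proof -
    obtain mu where mu: "mu \<in> spectrum B" and nmu: "norm mu = spectral_radius B"
      using spectral_radius_mem_max(1)[OF B n] by auto
    from mu obtain w where ev: "eigenvector B w mu"
      unfolding spectrum_def eigenvalue_def by auto
    have w: "w \<in> carrier_vec n" and w0: "w \<noteq> 0\<^sub>v n" and Bw: "B *\<^sub>v w = mu \<cdot>\<^sub>v w"
      using ev B unfolding eigenvector_def by auto
    have "B *\<^sub>v w = complex_of_real (1/s) \<cdot>\<^sub>v (Ac *\<^sub>v w)"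
      unfolding B_def by (rule smult_mat_mult_vec[OF Ac w])
    then have "complex_of_real s \<cdot>\<^sub>v (B *\<^sub>v w) = Ac *\<^sub>v w"
      using s by (simp add: smult_smult_assoc flip: of_real_mult)
    with Bw have "Ac *\<^sub>v w = (complex_of_real s * mu) \<cdot>\<^sub>v w"
      by (simp add: smult_smult_assoc)
    then have "eigenvector Ac w (complex_of_real s * mu)"
      unfolding eigenvector_def using w w0 Ac by simp
    then have "norm (complex_of_real s * mu) \<in> norm ` spectrum Ac"
      unfolding spectrum_def eigenvalue_def by auto
    from spectral_radius_mem_max(2)[OF Ac n this]
    have "s * norm mu \<le> spectral_radius Ac" using s by (simp add: norm_mult)
    also have "\<dots> < s" using rs unfolding real_spectral_radius_def Ac_def .
    finally have "norm mu < 1" using s by simp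
    then show ?thesis using nmu by simp
  qed
  from spectral_radius_jnf_norm_bound_less_1_upper_triangular[OF B this]
  obtain c where c: "\<And>k. norm_bound (B ^\<^sub>m k) c" by auto
  have entry: "\<bar>(A ^\<^sub>m k) $$ (i,j)\<bar> \<le> c * s ^ k" if i: "i < n" and j: "j < n" for k i j
  proof -
    have "B ^\<^sub>m k = complex_of_real (1/s) ^ k \<cdot>\<^sub>m map_mat complex_of_real (A ^\<^sub>m k)"
    proof -
      have "B ^\<^sub>m k = complex_of_real (1/s) ^ k \<cdot>\<^sub>m Ac ^\<^sub>m k"
        unfolding B_def by (rule smult_pow_mat[OF Ac])
      also have "Ac ^\<^sub>m k = map_mat complex_of_real (A ^\<^sub>m k)"
        unfolding Ac_def by (rule of_real_hom.mat_hom_pow[OF A, symmetric])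
      finally show ?thesis .
    qed
    then have "(B ^\<^sub>m k) $$ (i,j) = complex_of_real ((1/s) ^ k * (A ^\<^sub>m k) $$ (i,j))"
      using A i j by simp
    moreover have "norm ((B ^\<^sub>m k) $$ (i,j)) \<le> c"
      using c[of k] B i j unfolding norm_bound_def by simp
    ultimately have "(1/s) ^ k * \<bar>(A ^\<^sub>m k) $$ (i,j)\<bar> \<le> c"
      using s by (simp add: norm_mult norm_power norm_divide)
    then show ?thesis using s by (simp add: field_simps)
  qed
  have "mnorm (A ^\<^sub>m k) \<le> (real n * real n * c) * s ^ k" for k
  proof -
    have "mnorm (A ^\<^sub>m k) = (\<Sum>i<n. \<Sum>j<n. \<bar>(A ^\<^sub>m k) $$ (i,j)\<bar>)"
      unfolding mnorm_def using A by simp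
    also have "\<dots> \<le> (\<Sum>i<n. \<Sum>j<n. c * s ^ k)"
      by (intro sum_mono entry) auto
    also have "\<dots> = (real n * real n * c) * s ^ k" by simp
    finally show ?thesis .
  qed
  then show ?thesis by blast
qed



lemma pow_mat_add:
  assumes A: "A \<in> carrier_mat n n"
  shows "A ^\<^sub>m (a + b) = A ^\<^sub>m a * A ^\<^sub>m b"
proof (induction b)
  case 0
  then show ?case using A by simp
next
  case (Suc b)
  have "A ^\<^sub>m (a + Suc b) = (A ^\<^sub>m a * A ^\<^sub>m b) * A" using Suc by simp
  also have "\<dots> = A ^\<^sub>m a * (A ^\<^sub>m b * A)"
    by (rule assoc_mult_mat[of _ n n _ n _ n]) (use A in auto)
  finally show ?case by simp
qed

lemma cont_pow_entries:
  fixes A :: "real \<Rightarrow> real mat"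
  assumes Acar: "\<And>\<nu>. A \<nu> \<in> carrier_mat n n"
    and cont: "\<And>i j. i < n \<Longrightarrow> j < n \<Longrightarrow> continuous_on UNIV (\<lambda>\<nu>. A \<nu> $$ (i,j))"
  shows "i < n \<Longrightarrow> j < n \<Longrightarrow> continuous_on UNIV (\<lambda>\<nu>. (A \<nu> ^\<^sub>m k) $$ (i,j))"
proof (induction k arbitrary: i j)
  case 0
  have "\<And>\<nu>. dim_row (A \<nu>) = n" using Acar by auto
  then show ?case by (simp add: continuous_on_const)
next
  case (Suc k)
  have eq: "(A \<nu> ^\<^sub>m Suc k) $$ (i,j) = (\<Sum>l<n. (A \<nu> ^\<^sub>m k) $$ (i,l) * A \<nu> $$ (l,j))" for \<nu>
    using mult_mat_entry[of "A \<nu> ^\<^sub>m k" n n "A \<nu>" n i j] Acar[of \<nu>] Suc.prems by simp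
  have c1: "continuous_on UNIV (\<lambda>\<nu>. (A \<nu> ^\<^sub>m k) $$ (i,l))" if "l < n" for l
    using Suc.IH[of i l] Suc.prems that by blast
  have c2: "continuous_on UNIV (\<lambda>\<nu>. A \<nu> $$ (l,j))" if "l < n" for l
    using cont[of l j] Suc.prems that by blast
  show ?case unfolding eq
    by (rule continuous_on_sum, rule continuous_on_mult) (use c1 c2 in auto)
qed

lemma cont_mnorm_pow:
  fixes A :: "real \<Rightarrow> real mat"
  assumes Acar: "\<And>\<nu>. A \<nu> \<in> carrier_mat n n"
    and cont: "\<And>i j. i < n \<Longrightarrow> j < n \<Longrightarrow> continuous_on UNIV (\<lambda>\<nu>. A \<nu> $$ (i,j))"
  shows "continuous_on UNIV (\<lambda>\<nu>. mnorm (A \<nu> ^\<^sub>m k))"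
proof -
  have eq: "mnorm (A \<nu> ^\<^sub>m k) = (\<Sum>i<n. \<Sum>j<n. \<bar>(A \<nu> ^\<^sub>m k) $$ (i,j)\<bar>)" for \<nu>
    unfolding mnorm_def using Acar[of \<nu>] by simp
  show ?thesis unfolding eq
    by (intro continuous_on_sum continuous_on_rabs cont_pow_entries[OF Acar cont]) auto
qed

lemma good_power:
  assumes A: "A \<in> carrier_mat n n" and n: "0 < n" and rs: "real_spectral_radius A < s"
  shows "\<exists>N\<ge>1. mnorm (A ^\<^sub>m N) < s ^ N"
proof -
  define rho where "rho = real_spectral_radius A"
  have r0: "0 \<le> rho" unfolding rho_def by (rule rsr_nonneg[OF A n])
  define s' where "s' = (rho + s) / 2"
  have s's: "s' < s" and rs': "rho < s'" and s'0: "0 < s'" and s0: "0 < s"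
    using rs r0 unfolding s'_def rho_def by auto
  obtain c where c: "\<And>k. mnorm (A ^\<^sub>m k) \<le> c * s' ^ k"
    using pointwise_exp_bound[OF A n rs'[unfolded rho_def]] by blast
  have "(\<lambda>N. (s' / s) ^ N) \<longlonglongrightarrow> 0"
    by (rule LIMSEQ_realpow_zero) (use s's s'0 s0 in auto)
  then have "(\<lambda>N. c * (s' / s) ^ N) \<longlonglongrightarrow> c * 0"
    by (intro tendsto_mult tendsto_const)
  then have "eventually (\<lambda>N. c * (s' / s) ^ N < 1) sequentially"
    by (intro order_tendstoD(2)) auto
  then obtain N0 where N0: "\<And>N. N \<ge> N0 \<Longrightarrow> c * (s' / s) ^ N < 1"
    unfolding eventually_sequentially by blast
  define N where "N = N0 + 1"
  have "mnorm (A ^\<^sub>m N) \<le> c * s' ^ N" by (rule c)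
  also have "\<dots> = (c * (s' / s) ^ N) * s ^ N" using s0 by (simp add: power_divide)
  also have "\<dots> < 1 * s ^ N"
    by (intro mult_strict_right_mono N0) (use s0 in \<open>auto simp: N_def\<close>)
  finally show ?thesis unfolding N_def by (intro exI[of _ "N0 + 1"]) auto
qed

lemma uniform_bound:
  fixes A :: "real \<Rightarrow> real mat"
  assumes Acar: "\<And>\<nu>. A \<nu> \<in> carrier_mat n n" and n: "0 < n"
    and cont: "\<And>i j. i < n \<Longrightarrow> j < n \<Longrightarrow> continuous_on UNIV (\<lambda>\<nu>. A \<nu> $$ (i,j))"
    and K: "compact K" and s: "0 < s"
    and rs: "\<And>\<nu>. \<nu> \<in> K \<Longrightarrow> real_spectral_radius (A \<nu>) < s"
  shows "\<exists>W>0. \<forall>\<nu>\<in>K. \<forall>t. mnorm (A \<nu> ^\<^sub>m t) \<le> W * s ^ t"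
proof -
  define U where "U N = {\<nu>. mnorm (A \<nu> ^\<^sub>m N) < s ^ N}" for N
  have opn: "open (U N)" for N
    unfolding U_def by (intro open_Collect_less cont_mnorm_pow[OF Acar cont] continuous_on_const)
  have cov: "K \<subseteq> (\<Union>N\<in>{1..}. U N)"
  proof
    fix \<nu> assume "\<nu> \<in> K"
    from good_power[OF Acar n rs[OF this]] obtain N where "N \<ge> 1" "mnorm (A \<nu> ^\<^sub>m N) < s ^ N" by blast
    then show "\<nu> \<in> (\<Union>N\<in>{1..}. U N)" unfolding U_def by auto
  qed
  obtain C where C: "C \<subseteq> {1..}" "finite C" "K \<subseteq> (\<Union>N\<in>C. U N)"
    by (rule compactE_image[OF K opn cov])
  define L where "L = Max (insert 1 C)"
  have NL: "N \<le> L" if "N \<in> C" for N unfolding L_def using C(2) that by simp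
  have "\<forall>k. \<exists>b. \<forall>\<nu>\<in>K. mnorm (A \<nu> ^\<^sub>m k) \<le> b"
  proof
    fix k
    have "compact ((\<lambda>\<nu>. mnorm (A \<nu> ^\<^sub>m k)) ` K)"
      by (rule compact_continuous_image[OF continuous_on_subset[OF cont_mnorm_pow[OF Acar cont]] K]) auto
    then have "bounded ((\<lambda>\<nu>. mnorm (A \<nu> ^\<^sub>m k)) ` K)" by (rule compact_imp_bounded)
    then obtain b where "\<forall>x\<in>(\<lambda>\<nu>. mnorm (A \<nu> ^\<^sub>m k)) ` K. \<bar>x\<bar> \<le> b" unfolding bounded_real by blast
    then show "\<exists>b. \<forall>\<nu>\<in>K. mnorm (A \<nu> ^\<^sub>m k) \<le> b"
      by (intro exI[of _ b]) (auto dest: abs_le_D1)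
  qed
  then obtain bf where bf: "\<And>k \<nu>. \<nu> \<in> K \<Longrightarrow> mnorm (A \<nu> ^\<^sub>m k) \<le> bf k" by metis
  define M where "M = (\<Sum>k<L. \<bar>bf k\<bar>)"
  have M0: "0 \<le> M" unfolding M_def by (intro sum_nonneg) auto
  have Mb: "mnorm (A \<nu> ^\<^sub>m k) \<le> M" if "\<nu> \<in> K" "k < L" for \<nu> k
  proof -
    have "bf k \<le> \<bar>bf k\<bar>" by simp
    also have "\<dots> \<le> M" unfolding M_def using that by (intro member_le_sum[where f = "\<lambda>k. \<bar>bf k\<bar>"]) auto
    finally show ?thesis using bf[OF that(1), of k] by linarith
  qed
  define W where "W = M * (\<Sum>k<L. (1/s) ^ k) + 1"
  have W0: "0 < W" unfolding W_def using M0 s by (simp add: sum_nonneg add_nonneg_pos)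
  have main: "\<forall>\<nu>\<in>K. mnorm (A \<nu> ^\<^sub>m t) \<le> W * s ^ t" for t
  proof (induction t rule: less_induct)
    case (less t)
    show ?case
    proof
      fix \<nu> assume nu: "\<nu> \<in> K"
      show "mnorm (A \<nu> ^\<^sub>m t) \<le> W * s ^ t"
      proof (cases "t < L")
        case True
        have "(1/s) ^ t \<le> (\<Sum>k<L. (1/s) ^ k)"
          using True s by (intro member_le_sum[where f = "\<lambda>k. (1/s) ^ k"]) auto
        then have "M * (1/s) ^ t \<le> M * (\<Sum>k<L. (1/s) ^ k)" by (rule mult_left_mono[OF _ M0])
        then have "M * (1/s) ^ t \<le> W" unfolding W_def by linarith
        then have "M * (1/s) ^ t * s ^ t \<le> W * s ^ t" using s by (intro mult_right_mono) auto
        moreover have "M * (1/s) ^ t * s ^ t = M" using s by (simp add: power_one_over field_simps)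
        ultimately show ?thesis using Mb[OF nu True] by linarith
      next
        case False
        from nu C(3) obtain N where N: "N \<in> C" and nuN: "\<nu> \<in> U N" by blast
        have N1: "1 \<le> N" using N C(1) by auto
        have Nt: "N \<le> t" using NL[OF N] False by linarith
        have t_eq: "t = N + (t - N)" using Nt by simp
        have "mnorm (A \<nu> ^\<^sub>m t) = mnorm (A \<nu> ^\<^sub>m N * A \<nu> ^\<^sub>m (t - N))"
          by (subst t_eq, subst pow_mat_add[OF Acar]) simp
        also have "\<dots> \<le> mnorm (A \<nu> ^\<^sub>m N) * mnorm (A \<nu> ^\<^sub>m (t - N))"
          by (rule mnorm_mult[of _ n n _ n]) (use Acar in auto)
        also have "\<dots> \<le> s ^ N * (W * s ^ (t - N))"
        proof (intro mult_mono)
          show "mnorm (A \<nu> ^\<^sub>m N) \<le> s ^ N" using nuN unfolding U_def by simp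
          show "mnorm (A \<nu> ^\<^sub>m (t - N)) \<le> W * s ^ (t - N)"
            using less.IH[of "t - N"] N1 Nt nu by auto
        qed (use s in \<open>auto simp: mnorm_nonneg\<close>)
        also have "\<dots> = W * s ^ t" by (subst (2) t_eq, subst power_add) simp
        finally show ?thesis .
      qed
    qed
  qed
  show ?thesis using W0 main by blast
qed

lemma pow_root_eq:
  assumes "0 \<le> x" "0 < t"
  shows "(x ^ t) powr (1 / real t) = x"
proof (cases "x = 0")
  case True then show ?thesis using assms by simp
next
  case False
  then have x: "0 < x" using assms by simp
  have "(x ^ t) powr (1 / real t) = (x powr real t) powr (1 / real t)" using powr_realpow[OF x] by simp
  also have "\<dots> = x" using assms by (simp add: powr_powr)
  finally show ?thesis .
qed

lemma liminf_le:
  fixes A :: "real \<Rightarrow> real mat"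
  assumes Acar: "\<And>\<nu>. A \<nu> \<in> carrier_mat n n" and n: "0 < n"
    and cont: "\<And>i j. i < n \<Longrightarrow> j < n \<Longrightarrow> continuous_on UNIV (\<lambda>\<nu>. A \<nu> $$ (i,j))"
    and K: "compact K" and s: "0 < s"
    and rs: "\<And>\<nu>. \<nu> \<in> K \<Longrightarrow> real_spectral_radius (A \<nu>) < s"
  shows "liminf (\<lambda>t::nat. SUP \<nu>\<in>K. ereal (spectral_norm (A \<nu> ^\<^sub>m t) powr (1 / real t))) \<le> ereal s"
proof -
  obtain W where W0: "0 < W" and W: "\<And>\<nu> t. \<nu> \<in> K \<Longrightarrow> mnorm (A \<nu> ^\<^sub>m t) \<le> W * s ^ t"
    using uniform_bound[OF Acar n cont K s rs] by blast
  have ev: "eventually (\<lambda>t. (SUP \<nu>\<in>K. ereal (spectral_norm (A \<nu> ^\<^sub>m t) powr (1 / real t)))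
              \<le> ereal (W powr (1 / real t) * s)) sequentially"
    using eventually_ge_at_top[of "1::nat"]
  proof eventually_elim
    case (elim t)
    show ?case
    proof (rule SUP_least)
      fix \<nu> assume nu: "\<nu> \<in> K"
      have Pc: "A \<nu> ^\<^sub>m t \<in> carrier_mat n n" using Acar by simp
      have S0: "0 \<le> spectral_norm (A \<nu> ^\<^sub>m t)" by (rule spectral_norm_nonneg[OF Pc n])
      have "spectral_norm (A \<nu> ^\<^sub>m t) \<le> mnorm (A \<nu> ^\<^sub>m t)" by (rule spectral_norm_le_mnorm[OF Pc n])
      also have "\<dots> \<le> W * s ^ t" by (rule W[OF nu])
      finally have le: "spectral_norm (A \<nu> ^\<^sub>m t) \<le> W * s ^ t" .
      have "spectral_norm (A \<nu> ^\<^sub>m t) powr (1 / real t) \<le> (W * s ^ t) powr (1 / real t)"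
        by (rule powr_mono2) (use S0 le in auto)
      also have "\<dots> = W powr (1 / real t) * (s ^ t) powr (1 / real t)"
        using W0 s by (simp add: powr_mult)
      also have "(s ^ t) powr (1 / real t) = s" using s elim by (intro pow_root_eq) auto
      finally show "ereal (spectral_norm (A \<nu> ^\<^sub>m t) powr (1 / real t)) \<le> ereal (W powr (1 / real t) * s)"
        by simp
    qed
  qed
  have "(\<lambda>t::nat. W powr (1 / real t) * s) \<longlonglongrightarrow> W powr 0 * s"
    by (intro tendsto_mult tendsto_const tendsto_powr lim_1_over_n) (use W0 in auto)
  then have lim: "(\<lambda>t::nat. ereal (W powr (1 / real t) * s)) \<longlonglongrightarrow> ereal s"
    using W0 by (intro tendsto_ereal) simp
  have "liminf (\<lambda>t::nat. SUP \<nu>\<in>K. ereal (spectral_norm (A \<nu> ^\<^sub>m t) powr (1 / real t)))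
        \<le> liminf (\<lambda>t::nat. ereal (W powr (1 / real t) * s))"
    by (rule Liminf_mono[OF ev])
  also have "\<dots> = ereal s" by (rule lim_imp_Liminf[OF trivial_limit_sequentially lim])
  finally show ?thesis .
qed



theorem lemma26:
  fixes p :: nat and \<mu> l :: real and q r :: "nat \<Rightarrow> real"
  assumes "p \<ge> 1" and "0 < \<mu>" and "\<mu> < l"
    and "\<not> (\<exists>\<nu>\<in>{\<mu>..l}. \<forall>j<p. q j + r j * \<nu> = 0)"
  shows "(SUP \<nu>\<in>{\<mu>..l}. ereal (real_spectral_radius (companion p (\<lambda>j. q j + r j * \<nu>))))
           = (SUP \<nu>\<in>{\<mu>..l}. liminf (\<lambda>t::nat. ereal (spectral_norm (companion p (\<lambda>j. q j + r j * \<nu>) ^\<^sub>m t) powr (1 / real t))))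
       \<and> (SUP \<nu>\<in>{\<mu>..l}. liminf (\<lambda>t::nat. ereal (spectral_norm (companion p (\<lambda>j. q j + r j * \<nu>) ^\<^sub>m t) powr (1 / real t))))
           \<ge> liminf (\<lambda>t::nat. SUP \<nu>\<in>{\<mu>..l}. ereal (spectral_norm (companion p (\<lambda>j. q j + r j * \<nu>) ^\<^sub>m t) powr (1 / real t)))"
proof -
  define C where "C \<nu> = companion p (\<lambda>j. q j + r j * \<nu>)" for \<nu>
  have p: "0 < p" using assms(1) by simp
  have Ccar: "C \<nu> \<in> carrier_mat p p" for \<nu> unfolding C_def companion_def by simp
  have cont: "continuous_on UNIV (\<lambda>\<nu>. C \<nu> $$ (i,j))" if i: "i < p" and j: "j < p" for i j
  proof (cases "i = p - 1")
    case True
    then show ?thesis unfolding C_def companion_def using i j by (auto intro!: continuous_intros)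
  next
    case False
    then show ?thesis unfolding C_def companion_def using i j by (auto intro!: continuous_intros)
  qed
  have rho0: "0 \<le> real_spectral_radius (C \<nu>)" for \<nu> by (rule rsr_nonneg[OF Ccar p])
  have pw: "liminf (\<lambda>t::nat. ereal (spectral_norm (C \<nu> ^\<^sub>m t) powr (1 / real t)))
            = ereal (real_spectral_radius (C \<nu>))" for \<nu>
  proof (rule antisym)
    show "ereal (real_spectral_radius (C \<nu>)) \<le> liminf (\<lambda>t::nat. ereal (spectral_norm (C \<nu> ^\<^sub>m t) powr (1 / real t)))"
    proof (rule Liminf_bounded)
      show "eventually (\<lambda>t. ereal (real_spectral_radius (C \<nu>)) \<le> ereal (spectral_norm (C \<nu> ^\<^sub>m t) powr (1 / real t))) sequentially"
        using eventually_ge_at_top[of "1::nat"]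
      proof eventually_elim
        case (elim t)
        have "real_spectral_radius (C \<nu>) = (real_spectral_radius (C \<nu>) ^ t) powr (1 / real t)"
          using rho0 elim by (intro pow_root_eq[symmetric]) auto
        also have "\<dots> \<le> spectral_norm (C \<nu> ^\<^sub>m t) powr (1 / real t)"
          by (rule powr_mono2) (use rsr_pow_le[OF Ccar p] rho0 in auto)
        finally show ?case by simp
      qed
    qed
    show "liminf (\<lambda>t::nat. ereal (spectral_norm (C \<nu> ^\<^sub>m t) powr (1 / real t))) \<le> ereal (real_spectral_radius (C \<nu>))"
    proof (rule dense_ge)
      fix x assume x: "ereal (real_spectral_radius (C \<nu>)) < x"
      show "liminf (\<lambda>t::nat. ereal (spectral_norm (C \<nu> ^\<^sub>m t) powr (1 / real t))) \<le> x"
      proof (cases x)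
        case (real s)
        then have rs: "real_spectral_radius (C \<nu>) < s" using x by simp
        have s0: "0 < s" using rs rho0[of \<nu>] by linarith
        have "liminf (\<lambda>t::nat. SUP \<nu>'\<in>{\<nu>}. ereal (spectral_norm (C \<nu>' ^\<^sub>m t) powr (1 / real t))) \<le> ereal s"
          by (rule liminf_le[OF Ccar p cont compact_sing s0]) (use rs in auto)
        then show ?thesis using real by simp
      qed (use x in auto)
    qed
  qed
  define R where "R = (SUP \<nu>\<in>{\<mu>..l}. ereal (real_spectral_radius (C \<nu>)))"
  have eq1: "R = (SUP \<nu>\<in>{\<mu>..l}. liminf (\<lambda>t::nat. ereal (spectral_norm (C \<nu> ^\<^sub>m t) powr (1 / real t))))"
    unfolding R_def pw ..
  have ineq: "liminf (\<lambda>t::nat. SUP \<nu>\<in>{\<mu>..l}. ereal (spectral_norm (C \<nu> ^\<^sub>m t) powr (1 / real t))) \<le> R"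
  proof (rule dense_ge)
    fix x assume x: "R < x"
    show "liminf (\<lambda>t::nat. SUP \<nu>\<in>{\<mu>..l}. ereal (spectral_norm (C \<nu> ^\<^sub>m t) powr (1 / real t))) \<le> x"
    proof (cases x)
      case (real s)
      have rs: "real_spectral_radius (C \<nu>) < s" if "\<nu> \<in> {\<mu>..l}" for \<nu>
      proof -
        have "ereal (real_spectral_radius (C \<nu>)) \<le> R" unfolding R_def using that by (rule SUP_upper)
        then have "ereal (real_spectral_radius (C \<nu>)) < ereal s" using x real by (blast intro: le_less_trans)
        then show ?thesis by simp
      qed
      have mu: "\<mu> \<in> {\<mu>..l}" using assms(3) by simp
      have s0: "0 < s" using rs[OF mu] rho0[of \<mu>] by linarith
      have "liminf (\<lambda>t::nat. SUP \<nu>\<in>{\<mu>..l}. ereal (spectral_norm (C \<nu> ^\<^sub>m t) powr (1 / real t))) \<le> ereal s"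
        by (rule liminf_le[OF Ccar p cont compact_Icc s0 rs])
      then show ?thesis using real by simp
    qed (use x in auto)
  qed
  show ?thesis using eq1 ineq unfolding R_def C_def by simp
qed


end
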